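(* Let $\alpha=(a_1,\ldots,a_k)$ be a composition of a positive integer $n$. Then \[\zeta_-(M_\alpha)=\begin{cases}\dfrac{(-1)^{k_e(\alpha)}}{2^{2\lfloor k_o(\alpha)/2\rfloor}}\,C\bigl(0,\lfloor k_o(\alpha)/2\rfloor\bigr) & \text{if } a_k \text{ is odd},\\ 0 & \text{if } a_k\text{ is even;}\end{cases}\] \[\zeta_+(M_\alpha)=\begin{cases}\dfrac{(-1)^{k_e(\alpha)+1}}{2^{k_o(\alpha)}}\,C\bigl(1,k_o(\alpha)/2-1\bigr) & \text{if } a_1 \text{ and } a_k \text{ are odd and } n \text{ is even},\\ 1 & \text{if } \alpha=(n) \text{ and } n \text{ is even},\\ 0&\text{otherwise.}\end{cases}\] Also $\zeta_-(1)=\zeta_+(1)=1$.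
   Context: $\Bbbk$ is a field of characteristic $\neq 2$. A composition $\alpha=(a_1,\ldots,a_k)$ of $n\ge 0$ is a sequence of positive integers with sum $|\alpha|=n$; $k(\alpha)=k$ is its number of parts, $k_e(\alpha)$ and $k_o(\alpha)$ its numbers of even and odd parts; $()$ is the empty composition. ${\mathcal{Q}Sym}$ is the Hopf algebra of quasi-symmetric functions over $\Bbbk$ (in variables $x_1,x_2,\ldots$), graded by degree and connected, with monomial basis $M_\alpha=\sum_{i_1<\cdots<i_k}x_{i_1}^{a_1}\cdots x_{i_k}^{a_k}$ ($M_{()}=1$), product the ordinary product, coproduct $\Delta(M_\alpha)=\sum_{i=0}^k M_{(a_1,\ldots,a_i)}\otimes M_{(a_{i+1},\ldots,a_k)}$ and counit $\epsilon(M_\alpha)=1$ if $\alpha=()$, $0$ otherwise. Convolution of functionals: $\rho\psi=m\circ(\rho\otimes\psi)\circ\Delta$. Characters are algebra morphisms ${\mathcal{Q}Sym}\to\Bbbk$; they form a group under convolution. For a functional $\varphi$, $\bar\varphi(h)=(-1)^n\varphi(h)$ on homogeneous $h$ of degree $n$; $\varphi$ is even if $\bar\varphi=\varphi$, odd if $\bar\varphi=\varphi^{-1}$. Every character $\varphi$ factors uniquely as $\varphi=\varphi_+\varphi_-$ with $\varphi_+$ an even character and $\varphi_-$ an odd character. The universal character $\zeta$ is $\zeta(f)=f(1,0,0,\ldots)$; thus $\zeta(M_\alpha)=1$ if $\alpha=()$ or $\alpha=(n)$, and $0$ otherwise. $\zeta_+,\zeta_-$ denote its even and odd parts. The bivariate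 Catalan numbers are $C(m,n)=\frac{(2m)!(2n)!}{m!(m+n)!n!}$. *)

theory Defs
  imports Main
begin

text \<open>A linear functional on QSym is
represented by its values on the monomial basis, i.e. a function on compositions
(taken to be 0 on lists that are not compositions).\<close>

definition is_comp :: "nat list \<Rightarrow> bool" where
  "is_comp \<alpha> \<longleftrightarrow> (\<forall>a \<in> set \<alpha>. 0 < a)"

text \<open>Quasi-shuffle (stuffle) product: M_xs * M_ys = sum of M_g over g in qsh xs ys
(with multiplicity).\<close>
fun qsh :: "nat list \<Rightarrow> nat list \<Rightarrow> nat list list" where
  "qsh [] ys = [ys]"
| "qsh xs [] = [xs]"
| "qsh (x # xs) (y # ys) =
     map (Cons x) (qsh xs (y # ys)) @ map (Cons y) (qsh (x # xs) ys) @ map (Cons (x + y)) (qsh xs ys)"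

definition conv :: "(nat list \<Rightarrow> 'a::field) \<Rightarrow> (nat list \<Rightarrow> 'a) \<Rightarrow> nat list \<Rightarrow> 'a" where
  "conv \<rho> \<psi> \<alpha> = (\<Sum>i = 0..length \<alpha>. \<rho> (take i \<alpha>) * \<psi> (drop i \<alpha>))"

definition counit :: "nat list \<Rightarrow> 'a::field" where
  "counit \<alpha> = (if \<alpha> = [] then 1 else 0)"

definition bar :: "(nat list \<Rightarrow> 'a::field) \<Rightarrow> nat list \<Rightarrow> 'a" where
  "bar \<phi> \<alpha> = (-1) ^ sum_list \<alpha> * \<phi> \<alpha>"

definition is_character :: "(nat list \<Rightarrow> 'a::field) \<Rightarrow> bool" where
  "is_character \<phi> \<longleftrightarrow> \<phi> [] = 1 \<and> (\<forall>\<alpha>. \<not> is_comp \<alpha> \<longrightarrow> \<phi> \<alpha> = 0) \<and>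
     (\<forall>\<alpha> \<beta>. is_comp \<alpha> \<longrightarrow> is_comp \<beta> \<longrightarrow> \<phi> \<alpha> * \<phi> \<beta> = sum_list (map \<phi> (qsh \<alpha> \<beta>)))"

definition is_even_fun :: "(nat list \<Rightarrow> 'a::field) \<Rightarrow> bool" where
  "is_even_fun \<phi> \<longleftrightarrow> (\<forall>\<alpha>. is_comp \<alpha> \<longrightarrow> bar \<phi> \<alpha> = \<phi> \<alpha>)"

definition is_odd_fun :: "(nat list \<Rightarrow> 'a::field) \<Rightarrow> bool" where
  "is_odd_fun \<phi> \<longleftrightarrow> (\<forall>\<alpha>. is_comp \<alpha> \<longrightarrow>
      conv (bar \<phi>) \<phi> \<alpha> = counit \<alpha> \<and> conv \<phi> (bar \<phi>) \<alpha> = counit \<alpha>)"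

definition zeta :: "nat list \<Rightarrow> 'a::field" where
  "zeta \<alpha> = (if is_comp \<alpha> \<and> length \<alpha> \<le> 1 then 1 else 0)"

definition zeta_pm :: "(nat list \<Rightarrow> 'a::field) \<times> (nat list \<Rightarrow> 'a)" where
  "zeta_pm = (THE (p, m). is_character p \<and> is_even_fun p \<and> is_character m \<and> is_odd_fun m \<and>
      (\<forall>\<alpha>. is_comp \<alpha> \<longrightarrow> zeta \<alpha> = conv p m \<alpha>))"

definition zeta_plus :: "nat list \<Rightarrow> 'a::field" where
  "zeta_plus = fst zeta_pm"

definition zeta_minus :: "nat list \<Rightarrow> 'a::field" where
  "zeta_minus = snd zeta_pm"

text \<open>Bivariate Catalan numbers (always integers).\<close>
definition bicat :: "nat \<Rightarrow> nat \<Rightarrow> nat" where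
  "bicat m n = fact (2*m) * fact (2*n) div (fact m * fact (m + n) * fact n)"

definition k_even :: "nat list \<Rightarrow> nat" where
  "k_even \<alpha> = length (filter even \<alpha>)"

definition k_odd :: "nat list \<Rightarrow> nat" where
  "k_odd \<alpha> = length (filter odd \<alpha>)"

end

theory Submission
  imports Defs "HOL-Computational_Algebra.Formal_Power_Series"
begin

lemma qsh_Nil2[simp]: "qsh xs [] = [xs]" by (cases xs) auto

lemma qsh_comp_aux: "is_comp \<alpha> \<Longrightarrow> is_comp \<beta> \<Longrightarrow> (\<forall>\<gamma>\<in>set (qsh \<alpha> \<beta>). is_comp \<gamma>)"
proof (induction \<alpha> \<beta> rule: qsh.induct)
  case (3 x xs y ys)
  have c: "is_comp xs" "is_comp ys" "x > 0" "y > 0" using "3.prems" by (auto simp: is_comp_def)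
  have i1: "\<forall>\<gamma>\<in>set (qsh xs (y # ys)). is_comp \<gamma>" using "3.IH"(1) c "3.prems"(2) by blast
  have i2: "\<forall>\<gamma>\<in>set (qsh (x # xs) ys). is_comp \<gamma>" using "3.IH"(2) c "3.prems"(1) by blast
  have i3: "\<forall>\<gamma>\<in>set (qsh xs ys). is_comp \<gamma>" using "3.IH"(3) c by blast
  have cc: "is_comp (z # g) \<longleftrightarrow> z > 0 \<and> is_comp g" for z g by (simp add: is_comp_def)
  show ?case using i1 i2 i3 c by (simp only: qsh.simps set_append set_map ball_Un ball_simps cc) simp
qed (auto simp: is_comp_def)

lemma qsh_sum: "\<gamma> \<in> set (qsh \<alpha> \<beta>) \<Longrightarrow> sum_list \<gamma> = sum_list \<alpha> + sum_list \<beta>"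
  by (induction \<alpha> \<beta> arbitrary: \<gamma> rule: qsh.induct) auto

definition D :: "(nat list \<Rightarrow> nat list \<Rightarrow> 'b::comm_monoid_add) \<Rightarrow> nat list \<Rightarrow> 'b" where
  "D h \<gamma> = (\<Sum>l=0..length \<gamma>. h (take l \<gamma>) (drop l \<gamma>))"

lemma D_Nil[simp]: "D h [] = h [] []" by (simp add: D_def)

lemma D_Cons: "D h (z # \<gamma>) = h [] (z # \<gamma>) + D (\<lambda>a b. h (z # a) b) \<gamma>"
  unfolding D_def length_Cons sum.atLeast0_atMost_Suc_shift by simp

definition R :: "(nat list \<Rightarrow> nat list \<Rightarrow> 'b::comm_monoid_add) \<Rightarrow> nat list \<Rightarrow> nat list \<Rightarrow> 'b" where
  "R h \<alpha> \<beta> = (\<Sum>i=0..length \<alpha>. \<Sum>j=0..length \<beta>.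
      \<Sum>\<gamma>1\<leftarrow>qsh (take i \<alpha>) (take j \<beta>). \<Sum>\<gamma>2\<leftarrow>qsh (drop i \<alpha>) (drop j \<beta>). h \<gamma>1 \<gamma>2)"

lemma sum_list_map_add: "(\<Sum>x\<leftarrow>xs. f x + g x) = (\<Sum>x\<leftarrow>xs. f x) + (\<Sum>x\<leftarrow>xs. (g x :: 'b::comm_monoid_add))"
  by (induction xs) (auto simp: algebra_simps)

lemma bialg: "(\<Sum>\<gamma>\<leftarrow>qsh \<alpha> \<beta>. D h \<gamma>) = R h \<alpha> \<beta>"
proof (induction \<alpha> \<beta> arbitrary: h rule: qsh.induct)
  case (1 ys)
  then show ?case by (simp add: R_def D_def)
next
  case (2 v va)
  then show ?case by (simp add: R_def D_def del: take_Cons drop_Cons)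
next
  case (3 x xs y ys)
  let ?X = "x # xs" and ?Y = "y # ys"
  define T where "T i j = (\<Sum>\<gamma>1\<leftarrow>qsh (take i ?X) (take j ?Y). \<Sum>\<gamma>2\<leftarrow>qsh (drop i ?X) (drop j ?Y). h \<gamma>1 \<gamma>2)" for i j
  define A1 where "A1 i j = (\<Sum>\<gamma>1\<leftarrow>qsh (take i xs) (y # take j ys). \<Sum>\<gamma>2\<leftarrow>qsh (drop i xs) (drop j ys). h (x # \<gamma>1) \<gamma>2)" for i j
  define A2 where "A2 i j = (\<Sum>\<gamma>1\<leftarrow>qsh (x # take i xs) (take j ys). \<Sum>\<gamma>2\<leftarrow>qsh (drop i xs) (drop j ys). h (y # \<gamma>1) \<gamma>2)" for i j
  define A3 where "A3 i j = (\<Sum>\<gamma>1\<leftarrow>qsh (take i xs) (take j ys). \<Sum>\<gamma>2\<leftarrow>qsh (drop i xs) (drop j ys). h ((x + y) # \<gamma>1) \<gamma>2)" for i j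
  have T00: "T 0 0 = (\<Sum>\<gamma>\<leftarrow>qsh ?X ?Y. h [] \<gamma>)" by (simp add: T_def)
  have T0S: "T 0 (Suc j) = (\<Sum>\<gamma>2\<leftarrow>qsh ?X (drop j ys). h (y # take j ys) \<gamma>2)" for j
    by (simp add: T_def)
  have TS0: "T (Suc i) 0 = (\<Sum>\<gamma>2\<leftarrow>qsh (drop i xs) ?Y. h (x # take i xs) \<gamma>2)" for i
    by (simp add: T_def)
  have TSS: "T (Suc i) (Suc j) = A1 i j + A2 i j + A3 i j" for i j
    by (simp add: T_def A1_def A2_def A3_def o_def sum_list_map_add add.assoc)
  have RX: "R h ?X ?Y = T 0 0 + (\<Sum>j=0..length ys. T 0 (Suc j)) + (\<Sum>i=0..length xs. T (Suc i) 0)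
      + (\<Sum>i=0..length xs. \<Sum>j=0..length ys. T (Suc i) (Suc j))"
  proof -
    have "R h ?X ?Y = (\<Sum>i=0..Suc (length xs). \<Sum>j=0..Suc (length ys). T i j)"
      unfolding R_def T_def length_Cons ..
    also have "\<dots> = T 0 0 + (\<Sum>j=0..length ys. T 0 (Suc j)) + (\<Sum>i=0..length xs. T (Suc i) 0)
      + (\<Sum>i=0..length xs. \<Sum>j=0..length ys. T (Suc i) (Suc j))"
      unfolding sum.atLeast0_atMost_Suc_shift sum.distrib by (simp only: ac_simps o_def)
    finally show ?thesis .
  qed
  have R1: "R (\<lambda>a b. h (x # a) b) xs ?Y = (\<Sum>i=0..length xs. T (Suc i) 0) + (\<Sum>i=0..length xs. \<Sum>j=0..length ys. A1 i j)"
    unfolding R_def length_Cons sum.atLeast0_atMost_Suc_shift sum.distrib by (simp add: T_def A1_def o_def)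
  have R2: "R (\<lambda>a b. h (y # a) b) ?X ys = (\<Sum>j=0..length ys. T 0 (Suc j)) + (\<Sum>i=0..length xs. \<Sum>j=0..length ys. A2 i j)"
    unfolding R_def length_Cons sum.atLeast0_atMost_Suc_shift sum.distrib by (simp add: T_def A2_def o_def)
  have R3: "R (\<lambda>a b. h ((x + y) # a) b) xs ys = (\<Sum>i=0..length xs. \<Sum>j=0..length ys. A3 i j)"
    unfolding R_def A3_def by simp
  have "(\<Sum>\<gamma>\<leftarrow>qsh ?X ?Y. D h \<gamma>) = (\<Sum>\<gamma>\<leftarrow>qsh ?X ?Y. h [] \<gamma>)
     + R (\<lambda>a b. h (x # a) b) xs ?Y + R (\<lambda>a b. h (y # a) b) ?X ys + R (\<lambda>a b. h ((x + y) # a) b) xs ys"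
    using "3.IH" by (simp add: D_Cons o_def sum_list_map_add ac_simps)
  also have "\<dots> = R h ?X ?Y"
    unfolding RX R1 R2 R3 T00 TSS by (simp add: sum.distrib algebra_simps)
  finally show ?case .
qed


lemma is_comp_append[simp]: "is_comp (xs @ ys) \<longleftrightarrow> is_comp xs \<and> is_comp ys"
  by (auto simp: is_comp_def)

lemma is_comp_take: "is_comp \<alpha> \<Longrightarrow> is_comp (take i \<alpha>)"
  by (auto simp: is_comp_def dest: in_set_takeD)

lemma is_comp_drop: "is_comp \<alpha> \<Longrightarrow> is_comp (drop i \<alpha>)"
  by (auto simp: is_comp_def dest: in_set_dropD)

lemma not_comp_take_drop: "\<not> is_comp \<alpha> \<Longrightarrow> \<not> is_comp (take i \<alpha>) \<or> \<not> is_comp (drop i \<alpha>)"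
  using is_comp_append[of "take i \<alpha>" "drop i \<alpha>"] by simp

lemma D_conv: "D (\<lambda>a b. f a * g b) \<gamma> = conv f g \<gamma>"
  by (simp add: D_def conv_def)

lemma sum_list_prod: "(\<Sum>x\<leftarrow>xs. f x) * (\<Sum>y\<leftarrow>ys. g y) = (\<Sum>x\<leftarrow>xs. \<Sum>y\<leftarrow>ys. f x * (g y :: 'a::field))"
  by (simp add: sum_list_mult_const sum_list_const_mult)

lemma conv_char:
  assumes f: "is_character f" and g: "is_character g"
  shows "is_character (conv f g)"
  unfolding is_character_def
proof (intro conjI allI impI)
  show "conv f g [] = 1" using f g by (simp add: conv_def is_character_def)
next
  fix \<alpha> :: "nat list" assume "\<not> is_comp \<alpha>"
  then show "conv f g \<alpha> = 0" using f g not_comp_take_drop[of \<alpha>]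
    unfolding conv_def is_character_def by (metis (no_types, lifting) mult_eq_0_iff sum.neutral)
next
  fix \<alpha> \<beta> :: "nat list" assume a: "is_comp \<alpha>" and b: "is_comp \<beta>"
  have fm: "f x * f y = (\<Sum>\<gamma>\<leftarrow>qsh x y. f \<gamma>)" if "is_comp x" "is_comp y" for x y
    using f that by (simp add: is_character_def)
  have gm: "g x * g y = (\<Sum>\<gamma>\<leftarrow>qsh x y. g \<gamma>)" if "is_comp x" "is_comp y" for x y
    using g that by (simp add: is_character_def)
  have "conv f g \<alpha> * conv f g \<beta> = (\<Sum>i=0..length \<alpha>. \<Sum>j=0..length \<beta>.
      (f (take i \<alpha>) * f (take j \<beta>)) * (g (drop i \<alpha>) * g (drop j \<beta>)))"
    unfolding conv_def sum_distrib_left sum_distrib_right by (subst sum.swap) (simp add: ac_simps)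
  also have "\<dots> = R (\<lambda>a b. f a * g b) \<alpha> \<beta>"
    unfolding R_def
    by (intro sum.cong refl, simp add: fm gm a b is_comp_take is_comp_drop sum_list_prod)
  also have "\<dots> = (\<Sum>\<gamma>\<leftarrow>qsh \<alpha> \<beta>. conv f g \<gamma>)"
    by (simp add: bialg[symmetric] D_conv)
  finally show "conv f g \<alpha> * conv f g \<beta> = (\<Sum>\<gamma>\<leftarrow>qsh \<alpha> \<beta>. conv f g \<gamma>)" .
qed

lemma bar_char:
  assumes f: "is_character f"
  shows "is_character (bar f)"
  unfolding is_character_def
proof (intro conjI allI impI)
  show "bar f [] = 1" using f by (simp add: bar_def is_character_def)
next
  fix \<alpha> :: "nat list" assume "\<not> is_comp \<alpha>"
  then show "bar f \<alpha> = 0" using f by (simp add: bar_def is_character_def)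
next
  fix \<alpha> \<beta> :: "nat list" assume a: "is_comp \<alpha>" and b: "is_comp \<beta>"
  have "bar f \<alpha> * bar f \<beta> = (-1) ^ (sum_list \<alpha> + sum_list \<beta>) * (f \<alpha> * f \<beta>)"
    by (simp add: bar_def power_add)
  also have "\<dots> = (-1) ^ (sum_list \<alpha> + sum_list \<beta>) * (\<Sum>\<gamma>\<leftarrow>qsh \<alpha> \<beta>. f \<gamma>)"
    using f a b by (simp add: is_character_def)
  also have "\<dots> = (\<Sum>\<gamma>\<leftarrow>qsh \<alpha> \<beta>. bar f \<gamma>)"
    unfolding sum_list_const_mult[symmetric] bar_def
    by (intro arg_cong[where f=sum_list] map_cong refl) (simp add: qsh_sum)
  finally show "bar f \<alpha> * bar f \<beta> = (\<Sum>\<gamma>\<leftarrow>qsh \<alpha> \<beta>. bar f \<gamma>)" .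
qed


lemma qsh_len: "\<gamma> \<in> set (qsh \<alpha> \<beta>) \<Longrightarrow> length \<alpha> \<le> length \<gamma> \<and> length \<beta> \<le> length \<gamma>"
proof (induction \<alpha> \<beta> arbitrary: \<gamma> rule: qsh.induct)
  case (3 x xs y ys)
  from "3.prems" consider (a) g where "\<gamma> = x # g" "g \<in> set (qsh xs (y # ys))"
    | (b) g where "\<gamma> = y # g" "g \<in> set (qsh (x # xs) ys)"
    | (c) g where "\<gamma> = (x + y) # g" "g \<in> set (qsh xs ys)" by auto
  then show ?case
  proof cases
    case a
    then have "length xs \<le> length g \<and> Suc (length ys) \<le> length g" using "3.IH"(1) by simp
    then show ?thesis using a by simp
  next
    case b
    then have "Suc (length xs) \<le> length g \<and> length ys \<le> length g" using "3.IH"(2) by simp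
    then show ?thesis using b by simp
  next
    case c
    then have "length xs \<le> length g \<and> length ys \<le> length g" using "3.IH"(3) by simp
    then show ?thesis using c by simp
  qed
qed auto

lemma sum_list_zero: "(\<And>x. x \<in> set xs \<Longrightarrow> f x = 0) \<Longrightarrow> (\<Sum>x\<leftarrow>xs. f x) = (0::'b::comm_monoid_add)"
  by (induction xs) auto

lemma zeta_char: "is_character (zeta :: nat list \<Rightarrow> 'a::field)"
  unfolding is_character_def
proof (intro conjI allI impI)
  show "(zeta [] :: 'a) = 1" by (simp add: zeta_def is_comp_def)
next
  fix \<alpha> :: "nat list" assume "\<not> is_comp \<alpha>"
  then show "(zeta \<alpha> :: 'a) = 0" by (simp add: zeta_def)
next
  fix \<alpha> \<beta> :: "nat list" assume a: "is_comp \<alpha>" and b: "is_comp \<beta>"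
  show "(zeta \<alpha> :: 'a) * zeta \<beta> = (\<Sum>\<gamma>\<leftarrow>qsh \<alpha> \<beta>. zeta \<gamma>)"
  proof (cases "\<alpha> = [] \<or> \<beta> = []")
    case True
    then show ?thesis using a b by (auto simp: zeta_def is_comp_def)
  next
    case False
    show ?thesis
    proof (cases "length \<alpha> = 1 \<and> length \<beta> = 1")
      case True
      then obtain x y where "\<alpha> = [x]" "\<beta> = [y]"
        by (metis One_nat_def length_0_conv length_Suc_conv)
      then show ?thesis using a b by (simp add: zeta_def is_comp_def)
    next
      case False
      with \<open>\<not> (\<alpha> = [] \<or> \<beta> = [])\<close> have "length \<alpha> \<ge> 2 \<or> length \<beta> \<ge> 2"
        by (metis One_nat_def Suc_1 Suc_leI le_neq_implies_less length_greater_0_conv less_Suc_eq_0_disj not_less_eq_eq)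
      then have "\<gamma> \<in> set (qsh \<alpha> \<beta>) \<Longrightarrow> (zeta \<gamma> :: 'a) = 0" for \<gamma>
        using qsh_len[of \<gamma> \<alpha> \<beta>] by (auto simp: zeta_def)
      moreover have "(zeta \<alpha> :: 'a) * zeta \<beta> = 0"
        using \<open>length \<alpha> \<ge> 2 \<or> length \<beta> \<ge> 2\<close> by (auto simp: zeta_def)
      ultimately show ?thesis by (simp add: sum_list_zero)
    qed
  qed
qed

definition sE :: "nat list \<Rightarrow> 'a::field" where "sE \<gamma> = (-1) ^ k_even \<gamma>"
definition gE :: "nat \<Rightarrow> 'a::field" where "gE z = (if even z then -1 else 1)"

lemma sE_Nil[simp]: "sE [] = 1" by (simp add: sE_def k_even_def)
lemma sE_Cons: "sE (z # g) = gE z * sE g" by (simp add: sE_def k_even_def gE_def)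

lemma sE_qsh: "(\<Sum>\<gamma>\<leftarrow>qsh \<alpha> \<beta>. (sE \<gamma> :: 'a::field)) = sE \<alpha> * sE \<beta>"
proof (induction \<alpha> \<beta> rule: qsh.induct)
  case (3 x xs y ys)
  have g: "gE x * gE y + gE y * gE x + gE (x + y) = (gE x * gE y :: 'a)"
    by (simp add: gE_def)
  have "(\<Sum>\<gamma>\<leftarrow>qsh (x # xs) (y # ys). (sE \<gamma> :: 'a)) =
      gE x * (sE xs * sE (y # ys)) + gE y * (sE (x # xs) * sE ys) + gE (x + y) * (sE xs * sE ys)"
    using "3.IH" by (simp add: o_def sE_Cons sum_list_const_mult)
  also have "\<dots> = (gE x * gE y + gE y * gE x + gE (x + y)) * (sE xs * sE ys)"
    by (simp add: sE_Cons algebra_simps)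
  also have "\<dots> = sE (x # xs) * sE (y # ys)"
    unfolding g by (simp add: sE_Cons algebra_simps)
  finally show ?case .
qed auto

definition chi :: "nat list \<Rightarrow> 'a::field" where
  "chi \<gamma> = (if is_comp \<gamma> then sE \<gamma> else 0)"

lemma chi_char: "is_character (chi :: nat list \<Rightarrow> 'a::field)"
  unfolding is_character_def
proof (intro conjI allI impI)
  show "(chi [] :: 'a) = 1" by (simp add: chi_def is_comp_def)
next
  fix \<alpha> :: "nat list" assume "\<not> is_comp \<alpha>"
  then show "(chi \<alpha> :: 'a) = 0" by (simp add: chi_def)
next
  fix \<alpha> \<beta> :: "nat list" assume a: "is_comp \<alpha>" and b: "is_comp \<beta>"
  have "(\<Sum>\<gamma>\<leftarrow>qsh \<alpha> \<beta>. (chi \<gamma> :: 'a)) = (\<Sum>\<gamma>\<leftarrow>qsh \<alpha> \<beta>. sE \<gamma>)"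
    by (intro arg_cong[where f=sum_list] map_cong refl) (simp add: chi_def qsh_comp_aux[OF a b])
  then show "(chi \<alpha> :: 'a) * chi \<beta> = (\<Sum>\<gamma>\<leftarrow>qsh \<alpha> \<beta>. chi \<gamma>)"
    using a b by (simp add: sE_qsh chi_def)
qed


lemma sum_take_drop: "sum_list (take i \<alpha>) + sum_list (drop i \<alpha>) = sum_list \<alpha>"
  by (metis append_take_drop_id sum_list_append)

lemma take_pos: "is_comp \<alpha> \<Longrightarrow> 0 < i \<Longrightarrow> \<alpha> \<noteq> [] \<Longrightarrow> 0 < sum_list (take i \<alpha>)"
  by (cases \<alpha>; cases i) (auto simp: is_comp_def)

lemma drop_pos: "is_comp \<alpha> \<Longrightarrow> i < length \<alpha> \<Longrightarrow> 0 < sum_list (drop i \<alpha>)"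
  by (subst Cons_nth_drop_Suc[symmetric]) (auto simp: is_comp_def)

definition conv2 :: "(nat list \<Rightarrow> nat list \<Rightarrow> 'a::field) \<Rightarrow> (nat list \<Rightarrow> nat list \<Rightarrow> 'a) \<Rightarrow> nat list \<Rightarrow> nat list \<Rightarrow> 'a" where
  "conv2 F G \<alpha> \<beta> = (\<Sum>i=0..length \<alpha>. \<Sum>j=0..length \<beta>. F (take i \<alpha>) (take j \<beta>) * G (drop i \<alpha>) (drop j \<beta>))"

lemma sqrt2_unique:
  fixes F G :: "nat list \<Rightarrow> nat list \<Rightarrow> 'a::field"
  assumes two: "(2::'a) \<noteq> 0" and F0: "F [] [] = 1" and G0: "G [] [] = 1"
    and eq: "\<And>\<alpha> \<beta>. is_comp \<alpha> \<Longrightarrow> is_comp \<beta> \<Longrightarrow> conv2 F F \<alpha> \<beta> = conv2 G G \<alpha> \<beta>"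
  shows "is_comp \<alpha> \<Longrightarrow> is_comp \<beta> \<Longrightarrow> F \<alpha> \<beta> = G \<alpha> \<beta>"
proof (induction "sum_list \<alpha> + sum_list \<beta>" arbitrary: \<alpha> \<beta> rule: less_induct)
  case less
  show ?case
  proof (cases "\<alpha> = [] \<and> \<beta> = []")
    case True
    then show ?thesis using F0 G0 by simp
  next
    case False
    define I where "I = {0..length \<alpha>} \<times> {0..length \<beta>}"
    define J where "J = I - {(0,0), (length \<alpha>, length \<beta>)}"
    define t where "t H p = H (take (fst p) \<alpha>) (take (snd p) \<beta>) * H (drop (fst p) \<alpha>) (drop (snd p) \<beta>)"
      for H :: "nat list \<Rightarrow> nat list \<Rightarrow> 'a" and p
    have ne: "(0::nat, 0::nat) \<noteq> (length \<alpha>, length \<beta>)" using False by auto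
    have split: "conv2 H H \<alpha> \<beta> = H \<alpha> \<beta> + H \<alpha> \<beta> + sum (t H) J" if "H [] [] = 1" for H
    proof -
      have "conv2 H H \<alpha> \<beta> = sum (t H) I"
        unfolding conv2_def I_def t_def by (simp add: sum.cartesian_product split_def)
      also have "\<dots> = t H (0,0) + sum (t H) (I - {(0,0)})"
        by (rule sum.remove) (auto simp: I_def)
      also have "sum (t H) (I - {(0,0)}) = t H (length \<alpha>, length \<beta>) + sum (t H) (I - {(0,0)} - {(length \<alpha>, length \<beta>)})"
        by (rule sum.remove) (use ne in \<open>auto simp: I_def\<close>)
      also have "I - {(0,0)} - {(length \<alpha>, length \<beta>)} = J" by (auto simp: J_def)
      finally show ?thesis using that by (simp add: t_def)
    qed
    have rest: "t F p = t G p" if "p \<in> J" for p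
    proof -
      obtain i j where p: "p = (i, j)" by (cases p)
      have ij: "i \<le> length \<alpha>" "j \<le> length \<beta>" "(i, j) \<noteq> (0, 0)" "(i, j) \<noteq> (length \<alpha>, length \<beta>)"
        using that p by (auto simp: J_def I_def)
      have s1: "0 < sum_list (take i \<alpha>) + sum_list (take j \<beta>)"
      proof (cases "i = 0")
        case True
        then have "0 < j" using ij by auto
        moreover have "\<beta> \<noteq> []" using ij \<open>0 < j\<close> by auto
        ultimately show ?thesis using take_pos[OF less.prems(2)] by auto
      next
        case False
        moreover have "\<alpha> \<noteq> []" using ij False by auto
        ultimately show ?thesis using take_pos[OF less.prems(1)] by auto
      qed
      have s2: "0 < sum_list (drop i \<alpha>) + sum_list (drop j \<beta>)"
      proof (cases "i = length \<alpha>")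
        case True
        then have "j < length \<beta>" using ij by auto
        then show ?thesis using drop_pos[OF less.prems(2)] by auto
      next
        case False
        then have "i < length \<alpha>" using ij by auto
        then show ?thesis using drop_pos[OF less.prems(1)] by auto
      qed
      have tot: "sum_list (take i \<alpha>) + sum_list (take j \<beta>) + (sum_list (drop i \<alpha>) + sum_list (drop j \<beta>))
          = sum_list \<alpha> + sum_list \<beta>" using sum_take_drop[of i \<alpha>] sum_take_drop[of j \<beta>] by simp
      have "F (take i \<alpha>) (take j \<beta>) = G (take i \<alpha>) (take j \<beta>)"
        by (rule less.hyps[OF _ is_comp_take[OF less.prems(1)] is_comp_take[OF less.prems(2)]]) (use tot s2 in linarith)
      moreover have "F (drop i \<alpha>) (drop j \<beta>) = G (drop i \<alpha>) (drop j \<beta>)"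
        by (rule less.hyps[OF _ is_comp_drop[OF less.prems(1)] is_comp_drop[OF less.prems(2)]]) (use tot s1 in linarith)
      ultimately show ?thesis by (simp add: t_def p)
    qed
    have "F \<alpha> \<beta> + F \<alpha> \<beta> + sum (t F) J = G \<alpha> \<beta> + G \<alpha> \<beta> + sum (t G) J"
      using eq[OF less.prems] unfolding split[of F, OF F0] split[of G, OF G0] .
    moreover have "sum (t F) J = sum (t G) J" using rest by (rule sum.cong[OF refl])
    ultimately have "F \<alpha> \<beta> + F \<alpha> \<beta> = G \<alpha> \<beta> + G \<alpha> \<beta>" by simp
    then have "2 * F \<alpha> \<beta> = 2 * G \<alpha> \<beta>" by (simp only: mult_2)
    then show ?thesis using two by simp
  qed
qed


lemma sqrt_char:
  fixes m P :: "nat list \<Rightarrow> 'a::field"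
  assumes two: "(2::'a) \<noteq> 0" and P: "is_character P" and m0: "m [] = 1"
    and mz: "\<And>\<alpha>. \<not> is_comp \<alpha> \<Longrightarrow> m \<alpha> = 0"
    and sq: "\<And>\<gamma>. is_comp \<gamma> \<Longrightarrow> conv m m \<gamma> = P \<gamma>"
  shows "is_character m"
  unfolding is_character_def
proof (intro conjI allI impI)
  show "m [] = 1" by (rule m0)
next
  fix \<alpha> :: "nat list" assume "\<not> is_comp \<alpha>" then show "m \<alpha> = 0" by (rule mz)
next
  fix \<alpha> \<beta> :: "nat list" assume a: "is_comp \<alpha>" and b: "is_comp \<beta>"
  define F where "F a b = m a * m b" for a b
  define G where "G a b = (\<Sum>\<gamma>\<leftarrow>qsh a b. m \<gamma>)" for a b
  have Pm: "P x * P y = (\<Sum>\<gamma>\<leftarrow>qsh x y. P \<gamma>)" if "is_comp x" "is_comp y" for x y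
    using P that by (simp add: is_character_def)
  have "F \<alpha> \<beta> = G \<alpha> \<beta>"
  proof (rule sqrt2_unique[OF two _ _ _ a b])
    show "F [] [] = 1" by (simp add: F_def m0)
    show "G [] [] = 1" by (simp add: G_def m0)
  next
    fix x y :: "nat list" assume x: "is_comp x" and y: "is_comp y"
    have "conv2 F F x y = conv m m x * conv m m y"
      unfolding conv2_def conv_def F_def sum_distrib_left sum_distrib_right
      by (subst sum.swap) (simp add: ac_simps)
    also have "\<dots> = P x * P y" using sq x y by simp
    also have "\<dots> = (\<Sum>\<gamma>\<leftarrow>qsh x y. conv m m \<gamma>)"
      unfolding Pm[OF x y]
      by (intro arg_cong[where f=sum_list] map_cong refl) (simp add: sq qsh_comp_aux[OF x y])
    also have "\<dots> = R (\<lambda>a b. m a * m b) x y"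
      by (simp add: bialg[symmetric] D_conv)
    also have "\<dots> = conv2 G G x y"
      unfolding R_def conv2_def G_def by (simp add: sum_list_prod)
    finally show "conv2 F F x y = conv2 G G x y" .
  qed
  then show "m \<alpha> * m \<beta> = (\<Sum>\<gamma>\<leftarrow>qsh \<alpha> \<beta>. m \<gamma>)" by (simp add: F_def G_def)
qed


lemma conv_split:
  assumes "\<alpha> \<noteq> []"
  shows "conv f g \<alpha> = f [] * g \<alpha> + f \<alpha> * g [] + (\<Sum>i\<in>{1..<length \<alpha>}. f (take i \<alpha>) * g (drop i \<alpha>))"
proof -
  obtain n where n: "length \<alpha> = Suc n" using assms by (cases \<alpha>) auto
  have "conv f g \<alpha> = (\<Sum>i\<in>{0..Suc n}. f (take i \<alpha>) * g (drop i \<alpha>))" by (simp add: conv_def n)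
  also have "\<dots> = f [] * g \<alpha> + (\<Sum>i\<in>{Suc 0..Suc n}. f (take i \<alpha>) * g (drop i \<alpha>))"
    by (subst sum.atLeast_Suc_atMost) auto
  also have "(\<Sum>i\<in>{Suc 0..Suc n}. f (take i \<alpha>) * g (drop i \<alpha>))
      = (\<Sum>i\<in>{1..<Suc n}. f (take i \<alpha>) * g (drop i \<alpha>)) + f \<alpha> * g []"
    using n by (simp add: atLeastLessThanSuc_atLeastAtMost)
  finally show ?thesis using n by simp
qed

definition Spec :: "(nat list \<Rightarrow> 'a::field) \<Rightarrow> (nat list \<Rightarrow> 'a) \<Rightarrow> bool" where
  "Spec p m \<longleftrightarrow> is_character p \<and> is_even_fun p \<and> is_character m \<and> is_odd_fun m \<and>
      (\<forall>\<alpha>. is_comp \<alpha> \<longrightarrow> zeta \<alpha> = conv p m \<alpha>)"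

lemma spec_unique_comp:
  fixes p m p' m' :: "nat list \<Rightarrow> 'a::field"
  assumes two: "(2::'a) \<noteq> 0" and S: "Spec p m" and S': "Spec p' m'"
  shows "is_comp \<alpha> \<Longrightarrow> p \<alpha> = p' \<alpha> \<and> m \<alpha> = m' \<alpha>"
proof (induction "sum_list \<alpha>" arbitrary: \<alpha> rule: less_induct)
  case less
  have c: "is_character p" "is_even_fun p" "is_character m" "is_odd_fun m"
    "\<And>\<alpha>. is_comp \<alpha> \<Longrightarrow> zeta \<alpha> = conv p m \<alpha>"
    using S by (auto simp: Spec_def)
  have c': "is_character p'" "is_even_fun p'" "is_character m'" "is_odd_fun m'"
    "\<And>\<alpha>. is_comp \<alpha> \<Longrightarrow> zeta \<alpha> = conv p' m' \<alpha>"
    using S' by (auto simp: Spec_def)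
  have e: "p [] = 1" "m [] = 1" "p' [] = 1" "m' [] = 1"
    using c(1,3) c'(1,3) by (auto simp: is_character_def)
  show ?case
  proof (cases "\<alpha> = []")
    case True
    then show ?thesis using e by simp
  next
    case False
    define K where "K = {1..<length \<alpha>}"
    have IH: "p (take i \<alpha>) = p' (take i \<alpha>) \<and> m (take i \<alpha>) = m' (take i \<alpha>) \<and>
        p (drop i \<alpha>) = p' (drop i \<alpha>) \<and> m (drop i \<alpha>) = m' (drop i \<alpha>)" if "i \<in> K" for i
    proof -
      have i: "0 < i" "i < length \<alpha>" using that by (auto simp: K_def)
      have s1: "0 < sum_list (take i \<alpha>)" using take_pos[OF less.prems i(1) False] .
      have s2: "0 < sum_list (drop i \<alpha>)" using drop_pos[OF less.prems i(2)] .
      have t: "sum_list (take i \<alpha>) + sum_list (drop i \<alpha>) = sum_list \<alpha>" by (rule sum_take_drop)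
      have A: "p (take i \<alpha>) = p' (take i \<alpha>) \<and> m (take i \<alpha>) = m' (take i \<alpha>)"
        by (rule less.hyps[OF _ is_comp_take[OF less.prems]]) (use s2 t in linarith)
      have B: "p (drop i \<alpha>) = p' (drop i \<alpha>) \<and> m (drop i \<alpha>) = m' (drop i \<alpha>)"
        by (rule less.hyps[OF _ is_comp_drop[OF less.prems]]) (use s1 t in linarith)
      show ?thesis using A B by simp
    qed
    have restpm: "(\<Sum>i\<in>K. p (take i \<alpha>) * m (drop i \<alpha>)) = (\<Sum>i\<in>K. p' (take i \<alpha>) * m' (drop i \<alpha>))"
      using IH by (intro sum.cong) auto
    have restm: "(\<Sum>i\<in>K. bar m (take i \<alpha>) * m (drop i \<alpha>)) = (\<Sum>i\<in>K. bar m' (take i \<alpha>) * m' (drop i \<alpha>))"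
      using IH by (intro sum.cong) (auto simp: bar_def)
    have z: "zeta \<alpha> = m \<alpha> + p \<alpha> + (\<Sum>i\<in>K. p (take i \<alpha>) * m (drop i \<alpha>))"
      using c(5)[OF less.prems] conv_split[OF False, of p m] e by (simp add: K_def)
    have z': "zeta \<alpha> = m' \<alpha> + p' \<alpha> + (\<Sum>i\<in>K. p' (take i \<alpha>) * m' (drop i \<alpha>))"
      using c'(5)[OF less.prems] conv_split[OF False, of p' m'] e by (simp add: K_def)
    show ?thesis
    proof (cases "even (sum_list \<alpha>)")
      case True
      have bm: "bar m \<alpha> = m \<alpha>" "bar m' \<alpha> = m' \<alpha>" "bar m [] = 1" "bar m' [] = 1"
        using True e by (auto simp: bar_def)
      have o: "conv (bar m) m \<alpha> = 0" "conv (bar m') m' \<alpha> = 0"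
        using c(4) c'(4) less.prems False by (auto simp: is_odd_fun_def counit_def)
      have "m \<alpha> + m \<alpha> + (\<Sum>i\<in>K. bar m (take i \<alpha>) * m (drop i \<alpha>)) = 0"
        using o(1) conv_split[OF False, of "bar m" m] bm e by (simp add: K_def)
      moreover have "m' \<alpha> + m' \<alpha> + (\<Sum>i\<in>K. bar m' (take i \<alpha>) * m' (drop i \<alpha>)) = 0"
        using o(2) conv_split[OF False, of "bar m'" m'] bm e by (simp add: K_def)
      ultimately have "m \<alpha> + m \<alpha> = m' \<alpha> + m' \<alpha>" using restm by (metis add_right_cancel)
      then have "2 * m \<alpha> = 2 * m' \<alpha>" by (simp only: mult_2)
      then have mm: "m \<alpha> = m' \<alpha>" using two by simp
      have "p \<alpha> = p' \<alpha>" using z z' mm restpm by simp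
      then show ?thesis using mm by simp
    next
      case False
      have pz: "q \<alpha> = 0" if "is_even_fun q" for q :: "nat list \<Rightarrow> 'a"
      proof -
        have "bar q \<alpha> = q \<alpha>" using that less.prems by (simp add: is_even_fun_def)
        then have "- q \<alpha> = q \<alpha>" using False by (simp add: bar_def)
        then have "q \<alpha> + q \<alpha> = 0" by (metis neg_eq_iff_add_eq_0)
        then have "2 * q \<alpha> = 0" by (simp only: mult_2)
        then show "q \<alpha> = 0" using two by simp
      qed
      have "m \<alpha> = m' \<alpha>" using z z' restpm pz[OF c(2)] pz[OF c'(2)] by simp
      then show ?thesis using pz[OF c(2)] pz[OF c'(2)] by simp
    qed
  qed
qed


lemma spec_unique:
  fixes p m p' m' :: "nat list \<Rightarrow> 'a::field"
  assumes two: "(2::'a) \<noteq> 0" and S: "Spec p m" and S': "Spec p' m'"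
  shows "p' = p \<and> m' = m"
proof -
  have "p \<alpha> = p' \<alpha> \<and> m \<alpha> = m' \<alpha>" for \<alpha>
  proof (cases "is_comp \<alpha>")
    case True
    then show ?thesis using spec_unique_comp[OF two S S'] by blast
  next
    case False
    then show ?thesis using S S' by (simp add: Spec_def is_character_def)
  qed
  then show ?thesis by auto
qed

lemma zeta_pm_eq:
  fixes p m :: "nat list \<Rightarrow> 'a::field"
  assumes two: "(2::'a) \<noteq> 0" and S: "Spec p m"
  shows "zeta_pm = (p, m)"
  unfolding zeta_pm_def
proof (rule the_equality)
  show "case (p, m) of (p, m) \<Rightarrow> is_character p \<and> is_even_fun p \<and> is_character m \<and> is_odd_fun m \<and>
      (\<forall>\<alpha>. is_comp \<alpha> \<longrightarrow> zeta \<alpha> = conv p m \<alpha>)" using S by (simp add: Spec_def)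
next
  fix x :: "(nat list \<Rightarrow> 'a) \<times> (nat list \<Rightarrow> 'a)"
  assume "case x of (p, m) \<Rightarrow> is_character p \<and> is_even_fun p \<and> is_character m \<and> is_odd_fun m \<and>
      (\<forall>\<alpha>. is_comp \<alpha> \<longrightarrow> zeta \<alpha> = conv p m \<alpha>)"
  then have "Spec (fst x) (snd x)" by (cases x) (simp add: Spec_def)
  then show "x = (p, m)" using spec_unique[OF two S] by (cases x) auto
qed

lemma prod_half: "(\<Prod>i=0..<k. (-1/2::real) - of_nat i) * (4^k * fact k) = (-1)^k * fact (2*k)"
proof (induction k)
  case 0 then show ?case by simp
next
  case (Suc k)
  let ?P = "\<Prod>i=0..<k. (-1/2::real) - of_nat i"
  have "(\<Prod>i=0..<Suc k. (-1/2::real) - of_nat i) * (4^Suc k * fact (Suc k))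
      = (?P * (4^k * fact k)) * (((-1/2) - of_nat k) * 4 * (of_nat k + 1))"
    by (simp add: prod.atLeast0_lessThan_Suc fact_Suc algebra_simps)
  also have "\<dots> = (-1)^k * fact (2*k) * (((-1/2) - of_nat k) * 4 * (of_nat k + 1))"
    by (simp only: Suc)
  also have "\<dots> = (-1)^(Suc k) * fact (2 * Suc k)"
  proof -
    have f: "fact (2 * Suc k) = (of_nat (2*k+2) * of_nat (2*k+1) * fact (2*k) :: real)"
      by (simp add: algebra_simps)
    show ?thesis unfolding f by (simp add: algebra_simps)
  qed
  finally show ?case .
qed

lemma gb_half: "((-1/2::real) gchoose k) = (-1)^k * real ((2*k) choose k) / 4^k"
proof -
  let ?g = "(-1/2::real) gchoose k"
  have h1: "?g * fact k * (4^k * fact k) = (-1)^k * fact (2*k)"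
    using gbinomial_mult_fact'[of "-1/2::real" k] prod_half[of k] by simp
  have h2: "fact k * fact k * real ((2*k) choose k) = fact (2*k)"
  proof -
    have "fact k * fact k * ((2*k) choose k) = (fact (2*k) :: nat)"
      using binomial_fact_lemma[of k "2*k"] by simp
    then have "real (fact k * fact k * ((2*k) choose k)) = real (fact (2*k))" by (rule arg_cong)
    then show ?thesis by (simp only: of_nat_mult of_nat_fact)
  qed
  have nz: "fact k * fact k \<noteq> (0::real)" by simp
  have "fact k * fact k * (4^k * ?g) = fact k * fact k * ((-1)^k * real ((2*k) choose k))"
  proof -
    have "fact k * fact k * (4^k * ?g) = ?g * fact k * (4^k * fact k)" by (simp add: ac_simps)
    also have "\<dots> = (-1)^k * (fact k * fact k * real ((2*k) choose k))" using h1 h2 by simp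
    finally show ?thesis by (simp add: ac_simps)
  qed
  then have "4^k * ?g = (-1)^k * real ((2*k) choose k)" using nz by (metis mult_left_cancel)
  then show ?thesis by (simp add: field_simps)
qed

lemma central_conv_real: "(\<Sum>a=0..n. real ((2*a) choose a) * real ((2*(n-a)) choose (n-a))) = 4^n"
proof -
  have V: "(\<Sum>k=0..n. ((-1/2::real) gchoose k) * ((-1/2) gchoose (n - k))) = ((-1::real) gchoose n)"
    using gbinomial_Vandermonde[of "-1/2::real" "-1/2" n] by simp
  have m1: "((-1::real) gchoose n) = (-1)^n"
    using gbinomial_minus[of "1::real" n] by (simp add: binomial_gbinomial[symmetric])
  have "(\<Sum>k=0..n. ((-1/2::real) gchoose k) * ((-1/2) gchoose (n - k)))
      = (\<Sum>k=0..n. (-1)^n / 4^n * (real ((2*k) choose k) * real ((2*(n-k)) choose (n-k))))"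
  proof (intro sum.cong refl)
    fix k assume "k \<in> {0..n}"
    then have k: "k \<le> n" by simp
    have p1: "(-1::real)^k * (-1)^(n-k) = (-1)^n" using k by (simp add: power_add[symmetric])
    have p2: "(4::real)^k * 4^(n-k) = 4^n" using k by (simp add: power_add[symmetric])
    show "((-1/2::real) gchoose k) * ((-1/2) gchoose (n - k))
      = (-1)^n / 4^n * (real ((2*k) choose k) * real ((2*(n-k)) choose (n-k)))"
      unfolding gb_half p1[symmetric] p2[symmetric] by (simp add: field_simps)
  qed
  also have "\<dots> = (-1)^n / 4^n * (\<Sum>a=0..n. real ((2*a) choose a) * real ((2*(n-a)) choose (n-a)))"
    by (simp add: sum_distrib_left)
  finally have "(-1)^n / 4^n * (\<Sum>a=0..n. real ((2*a) choose a) * real ((2*(n-a)) choose (n-a))) = (-1::real)^n"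
    using V m1 by simp
  then show ?thesis by (simp add: field_simps)
qed

lemma central_conv: "(\<Sum>a=0..n. ((2*a) choose a) * ((2*(n-a)) choose (n-a))) = 4^n"
proof -
  have "real (\<Sum>a=0..n. ((2*a) choose a) * ((2*(n-a)) choose (n-a))) = real (4^n)"
    using central_conv_real by simp
  then show ?thesis by (simp only: of_nat_eq_iff)
qed


definition cc :: "nat \<Rightarrow> 'a::field" where "cc j = of_nat ((2*j) choose j) / 2^(2*j)"

lemma cc_conv:
  assumes two: "(2::'a::field) \<noteq> 0"
  shows "(\<Sum>a=0..n. cc a * cc (n-a)) = (1::'a)"
proof -
  have "(\<Sum>a=0..n. cc a * cc (n-a)) = (\<Sum>a=0..n. of_nat (((2*a) choose a) * ((2*(n-a)) choose (n-a))) / (2::'a)^(2*n))"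
  proof (intro sum.cong refl)
    fix a assume "a \<in> {0..n}"
    then have "2*a + 2*(n-a) = 2*n" by auto
    then have p: "(2::'a)^(2*a) * 2^(2*(n-a)) = 2^(2*n)" by (metis power_add)
    show "cc a * cc (n-a) = of_nat (((2*a) choose a) * ((2*(n-a)) choose (n-a))) / (2::'a)^(2*n)"
      unfolding cc_def p[symmetric] by simp
  qed
  also have "\<dots> = of_nat (\<Sum>a=0..n. ((2*a) choose a) * ((2*(n-a)) choose (n-a))) / (2::'a)^(2*n)"
    by (simp add: sum_divide_distrib)
  also have "\<dots> = of_nat (4^n) / (2::'a)^(2*n)" by (simp only: central_conv)
  also have "\<dots> = 1"
  proof -
    have "(of_nat (4^n) :: 'a) = 2^(2*n)" by (simp add: power_mult)
    moreover have "(2::'a)^(2*n) \<noteq> 0" using two by simp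
    ultimately show ?thesis by simp
  qed
  finally show ?thesis .
qed

lemma sum_odd_split: "(\<Sum>j=0..2*(n::nat)+1. (f j :: 'b::comm_monoid_add)) = (\<Sum>a=0..n. f (2*a) + f (2*a+1))"
proof (induction n)
  case 0 then show ?case by (simp add: numeral_2_eq_2)
next
  case (Suc n)
  have e: "2 * Suc n + 1 = Suc (Suc (2*n+1))" by simp
  show ?case unfolding e sum.atLeast0_atMost_Suc Suc by (simp add: add.assoc)
qed

lemma sum_even_split: "(\<Sum>j=0..2*(n::nat). (f j :: 'b::comm_monoid_add)) = (\<Sum>a=0..n. f (2*a)) + (\<Sum>a<n. f (2*a+1))"
proof (induction n)
  case 0 then show ?case by simp
next
  case (Suc n)
  have e: "2 * Suc n = Suc (Suc (2*n))" by simp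
  show ?case unfolding e sum.atLeast0_atMost_Suc Suc by (simp add: ac_simps)
qed

definition dd :: "nat \<Rightarrow> 'a::field" where "dd K = cc (K div 2)"


lemma dd_odd:
  assumes two: "(2::'a::field) \<noteq> 0"
  shows "(\<Sum>j=0..2*n+1. dd j * dd (2*n+1-j)) = (2::'a)"
    and "(\<Sum>j=0..2*n+1. (-1)^j * (dd j * dd (2*n+1-j))) = (0::'a)"
proof -
  have dv: "(2*a) div 2 = a" "(2*a+1) div 2 = a" "(2*n+1-2*a) div 2 = n - a" "(2*n+1-(2*a+1)) div 2 = n - a"
    if "a \<in> {0..n}" for a using that by auto
  have "(\<Sum>j=0..2*n+1. dd j * dd (2*n+1-j)) = (\<Sum>a=0..n. 2 * (cc a * cc (n-a) :: 'a))"
    unfolding sum_odd_split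
  proof (intro sum.cong refl)
    fix a assume a: "a \<in> {0..n}"
    show "dd (2*a) * dd (2*n+1-2*a) + dd (2*a+1) * dd (2*n+1-(2*a+1)) = 2 * (cc a * cc (n-a) :: 'a)"
      unfolding dd_def dv[OF a] by (simp only: mult_2)
  qed
  also have "\<dots> = 2" using cc_conv[OF two, of n] by (simp only: sum_distrib_left[symmetric] mult_1_right)
  finally show "(\<Sum>j=0..2*n+1. dd j * dd (2*n+1-j)) = (2::'a)" .
  have "(\<Sum>j=0..2*n+1. (-1)^j * (dd j * dd (2*n+1-j))) = (\<Sum>a=0..n. (0::'a))"
    unfolding sum_odd_split
  proof (intro sum.cong refl)
    fix a assume a: "a \<in> {0..n}"
    show "(-1)^(2*a) * (dd (2*a) * dd (2*n+1-2*a)) + (-1)^(2*a+1) * (dd (2*a+1) * dd (2*n+1-(2*a+1))) = (0::'a)"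
      unfolding dd_def dv[OF a] by simp
  qed
  then show "(\<Sum>j=0..2*n+1. (-1)^j * (dd j * dd (2*n+1-j))) = (0::'a)" by simp
qed

lemma dd_even:
  assumes two: "(2::'a::field) \<noteq> 0"
  shows "(\<Sum>j=0..2*Suc n. dd j * dd (2*Suc n-j)) = (2::'a)"
    and "(\<Sum>j=0..2*Suc n. (-1)^j * (dd j * dd (2*Suc n-j))) = (0::'a)"
proof -
  have dv: "(2*a) div 2 = a" "(2*Suc n-2*a) div 2 = Suc n - a"
    if "a \<in> {0..Suc n}" for a using that by auto
  have dv2: "(2*a+1) div 2 = a" "(2*Suc n-(2*a+1)) div 2 = n - a"
    if "a \<in> {0..n}" for a using that by auto
  have lt: "{..<Suc n} = {0..n}" by auto
  have s0: "(\<Sum>a=0..Suc n. dd (2*a) * dd (2*Suc n - 2*a)) = (1::'a)"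
  proof -
    have "(\<Sum>a=0..Suc n. dd (2*a) * dd (2*Suc n - 2*a)) = (\<Sum>a=0..Suc n. cc a * cc (Suc n-a) :: 'a)"
    proof (intro sum.cong refl)
      fix a assume a: "a \<in> {0..Suc n}"
      show "dd (2*a) * dd (2*Suc n - 2*a) = (cc a * cc (Suc n-a) :: 'a)" unfolding dd_def dv[OF a] ..
    qed
    then show ?thesis using cc_conv[OF two, of "Suc n"] by simp
  qed
  have s1: "(\<Sum>a<Suc n. dd (2*a+1) * dd (2*Suc n - (2*a+1))) = (1::'a)"
  proof -
    have "(\<Sum>a<Suc n. dd (2*a+1) * dd (2*Suc n - (2*a+1))) = (\<Sum>a=0..n. cc a * cc (n-a) :: 'a)"
      unfolding lt
    proof (intro sum.cong refl)
      fix a assume a: "a \<in> {0..n}"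
      show "dd (2*a+1) * dd (2*Suc n - (2*a+1)) = (cc a * cc (n-a) :: 'a)" unfolding dd_def dv2[OF a] ..
    qed
    then show ?thesis using cc_conv[OF two, of n] by simp
  qed
  show "(\<Sum>j=0..2*Suc n. dd j * dd (2*Suc n-j)) = (2::'a)"
    unfolding sum_even_split s0 s1 by simp
  have s1': "(\<Sum>a<Suc n. (-1)^(2*a+1) * (dd (2*a+1) * dd (2*Suc n - (2*a+1)))) = (-1::'a)"
    using s1 by (simp add: sum_negf)
  have s0': "(\<Sum>a=0..Suc n. (-1)^(2*a) * (dd (2*a) * dd (2*Suc n - 2*a))) = (1::'a)"
    using s0 by simp
  show "(\<Sum>j=0..2*Suc n. (-1)^j * (dd j * dd (2*Suc n-j))) = (0::'a)"
    unfolding sum_even_split s0' s1' by simp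
qed

lemma dd_sums:
  assumes two: "(2::'a::field) \<noteq> 0" and K: "K \<ge> 1"
  shows "(\<Sum>j=0..K. dd j * dd (K-j)) = (2::'a)"
    and "(\<Sum>j=0..K. (-1)^j * (dd j * dd (K-j))) = (0::'a)"
proof -
  have "(\<Sum>j=0..K. dd j * dd (K-j)) = (2::'a) \<and> (\<Sum>j=0..K. (-1)^j * (dd j * dd (K-j))) = (0::'a)"
  proof (cases "even K")
    case False
    then obtain n where n: "K = 2*n+1" by (metis oddE)
    show ?thesis unfolding n using dd_odd[OF two, of n] by blast
  next
    case True
    then obtain n where n: "K = 2*n" by (metis evenE)
    with K obtain n' where n': "n = Suc n'" by (cases n) auto
    show ?thesis unfolding n n' using dd_even[OF two, of n'] by blast
  qed
  then show "(\<Sum>j=0..K. dd j * dd (K-j)) = (2::'a)" and "(\<Sum>j=0..K. (-1)^j * (dd j * dd (K-j))) = (0::'a)"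
    by auto
qed

definition lastodd :: "nat list \<Rightarrow> bool" where "lastodd \<gamma> \<longleftrightarrow> \<gamma> = [] \<or> odd (last \<gamma>)"

definition mm :: "nat list \<Rightarrow> 'a::field" where
  "mm \<gamma> = (if is_comp \<gamma> \<and> lastodd \<gamma> then sE \<gamma> * dd (k_odd \<gamma>) else 0)"

lemma k_even_append[simp]: "k_even (xs @ ys) = k_even xs + k_even ys" by (simp add: k_even_def)
lemma k_odd_append[simp]: "k_odd (xs @ ys) = k_odd xs + k_odd ys" by (simp add: k_odd_def)
lemma k_odd_Nil[simp]: "k_odd [] = 0" by (simp add: k_odd_def)
lemma k_odd_Cons: "k_odd (a # xs) = (if odd a then Suc (k_odd xs) else k_odd xs)" by (simp add: k_odd_def)
lemma sE_append: "sE (xs @ ys) = sE xs * sE ys" by (simp add: sE_def power_add)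

lemma count_split:
  "(\<Sum>i=0..length \<alpha>. if lastodd (take i \<alpha>) then F (k_odd (take i \<alpha>)) else (0::'b::comm_monoid_add))
    = (\<Sum>j=0..k_odd \<alpha>. F j)"
proof (induction \<alpha> rule: rev_induct)
  case Nil
  then show ?case by (simp add: lastodd_def)
next
  case (snoc a \<alpha>)
  have t: "take i (\<alpha> @ [a]) = take i \<alpha>" if "i \<in> {0..length \<alpha>}" for i using that by simp
  have "(\<Sum>i=0..length (\<alpha> @ [a]). if lastodd (take i (\<alpha> @ [a])) then F (k_odd (take i (\<alpha> @ [a]))) else 0)
     = (\<Sum>i=0..length \<alpha>. if lastodd (take i (\<alpha> @ [a])) then F (k_odd (take i (\<alpha> @ [a]))) else 0)
       + (if odd a then F (k_odd (\<alpha> @ [a])) else 0)"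
    by (simp add: lastodd_def)
  also have "(\<Sum>i=0..length \<alpha>. if lastodd (take i (\<alpha> @ [a])) then F (k_odd (take i (\<alpha> @ [a]))) else 0)
      = (\<Sum>j=0..k_odd \<alpha>. F j)"
    unfolding snoc.IH[symmetric] by (intro sum.cong refl) (simp only: t)
  finally show ?case by (simp add: k_odd_def)
qed


lemma conv_w:
  assumes c: "is_comp \<gamma>" and ne: "\<gamma> \<noteq> []"
  shows "(\<Sum>i=0..length \<gamma>. w (k_odd (take i \<gamma>)) * (mm (take i \<gamma>) * mm (drop i \<gamma>)))
    = (if odd (last \<gamma>) then sE \<gamma> * (\<Sum>j=0..k_odd \<gamma>. w j * (dd j * dd (k_odd \<gamma> - j))) else (0::'a::field))"
proof (cases "odd (last \<gamma>)")
  case False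
  have "w (k_odd (take i \<gamma>)) * (mm (take i \<gamma>) * mm (drop i \<gamma>)) = (0::'a)" if "i \<in> {0..length \<gamma>}" for i
  proof (cases "i < length \<gamma>")
    case True
    then have "drop i \<gamma> \<noteq> []" "last (drop i \<gamma>) = last \<gamma>" by (auto simp: last_drop)
    then have "mm (drop i \<gamma>) = (0::'a)" using False by (simp add: mm_def lastodd_def)
    then show ?thesis by simp
  next
    case False
    then have "take i \<gamma> = \<gamma>" using that by simp
    then have "mm (take i \<gamma>) = (0::'a)" using \<open>\<not> odd (last \<gamma>)\<close> ne by (simp add: mm_def lastodd_def)
    then show ?thesis by simp
  qed
  then have "(\<Sum>i=0..length \<gamma>. w (k_odd (take i \<gamma>)) * (mm (take i \<gamma>) * mm (drop i \<gamma>))) = (0::'a)"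
    by (intro sum.neutral) blast
  then show ?thesis using False by simp
next
  case True
  let ?K = "k_odd \<gamma>"
  have "w (k_odd (take i \<gamma>)) * (mm (take i \<gamma>) * mm (drop i \<gamma>))
     = (if lastodd (take i \<gamma>) then sE \<gamma> * (w (k_odd (take i \<gamma>)) * (dd (k_odd (take i \<gamma>)) * dd (?K - k_odd (take i \<gamma>)))) else 0)"
    if "i \<in> {0..length \<gamma>}" for i
  proof -
    have ld: "lastodd (drop i \<gamma>)"
    proof (cases "i < length \<gamma>")
      case True
      then show ?thesis using \<open>odd (last \<gamma>)\<close> by (simp add: lastodd_def last_drop)
    next
      case False then show ?thesis by (simp add: lastodd_def)
    qed
    have sp: "sE (take i \<gamma>) * sE (drop i \<gamma>) = (sE \<gamma> :: 'a)"
      using sE_append[of "take i \<gamma>" "drop i \<gamma>"] by (simp only: append_take_drop_id) (rule sym)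
    have kp: "k_odd (drop i \<gamma>) = ?K - k_odd (take i \<gamma>)"
      using k_odd_append[of "take i \<gamma>" "drop i \<gamma>"] by simp
    show ?thesis
      using ld sp kp is_comp_take[OF c, of i] is_comp_drop[OF c, of i]
      by (auto simp: mm_def ac_simps)
  qed
  then have "(\<Sum>i=0..length \<gamma>. w (k_odd (take i \<gamma>)) * (mm (take i \<gamma>) * mm (drop i \<gamma>)))
      = (\<Sum>i=0..length \<gamma>. if lastodd (take i \<gamma>) then sE \<gamma> * (w (k_odd (take i \<gamma>)) * (dd (k_odd (take i \<gamma>)) * dd (?K - k_odd (take i \<gamma>)))) else 0)"
    by (rule sum.cong[OF refl])
  also have "\<dots> = (\<Sum>j=0..?K. sE \<gamma> * (w j * (dd j * dd (?K - j))))"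
    by (rule count_split)
  also have "\<dots> = sE \<gamma> * (\<Sum>j=0..?K. w j * (dd j * dd (?K - j)))"
    by (simp add: sum_distrib_left)
  finally show ?thesis using True by simp
qed


lemma mm_Nil[simp]: "mm [] = (1::'a::field)"
  by (simp add: mm_def is_comp_def lastodd_def dd_def cc_def)

lemma neg1_sum: "((-1::'a::field) ^ sum_list \<gamma>) = (-1) ^ k_odd \<gamma>"
proof (induction \<gamma>)
  case Nil then show ?case by simp
next
  case (Cons a \<gamma>)
  then show ?case by (cases "even a") (simp_all add: power_add k_odd_Cons)
qed

lemma ko_pos: "\<gamma> \<noteq> [] \<Longrightarrow> odd (last \<gamma>) \<Longrightarrow> k_odd \<gamma> \<ge> 1"
proof -
  assume "\<gamma> \<noteq> []" "odd (last \<gamma>)"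
  then have "last \<gamma> \<in> set (filter odd \<gamma>)" by simp
  then have "filter odd \<gamma> \<noteq> []" by (auto simp: filter_empty_conv)
  then show ?thesis by (simp add: k_odd_def Suc_le_eq)
qed

lemma zeta_len: "is_comp \<gamma> \<Longrightarrow> zeta \<gamma> = (if length \<gamma> \<le> 1 then 1 else 0)"
  by (simp add: zeta_def)

lemma conv_zeta_right:
  fixes f :: "nat list \<Rightarrow> 'a::field"
  assumes c: "is_comp (\<beta> @ [a])"
  shows "conv f zeta (\<beta> @ [a]) = f \<beta> + f (\<beta> @ [a])"
proof -
  let ?g = "\<beta> @ [a]"
  let ?n = "length \<beta>"
  have "conv f zeta ?g = (\<Sum>i<Suc ?n. f (take i ?g) * zeta (drop i ?g)) + f ?g * zeta []"
    by (simp add: conv_def atLeast0AtMost lessThan_Suc_atMost[symmetric] del: lessThan_Suc)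
  also have "(\<Sum>i<Suc ?n. f (take i ?g) * zeta (drop i ?g)) = (\<Sum>i<?n. f (take i ?g) * zeta (drop i ?g)) + f \<beta> * zeta [a]"
    by simp
  also have "(\<Sum>i<?n. f (take i ?g) * zeta (drop i ?g)) = 0"
  proof (intro sum.neutral ballI)
    fix i assume "i \<in> {..<?n}"
    then have "length (drop i ?g) \<ge> 2" by simp
    then have "\<not> (is_comp (drop i ?g) \<and> length (drop i ?g) \<le> 1)" by linarith
    then have "(zeta (drop i ?g) :: 'a) = 0" unfolding zeta_def by (rule if_not_P)
    then show "f (take i ?g) * zeta (drop i ?g) = 0" by simp
  qed
  moreover have "(zeta [] :: 'a) = 1" by (simp add: zeta_def is_comp_def)
  moreover have "(zeta [a] :: 'a) = 1" using c by (simp add: zeta_def is_comp_def)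
  ultimately show ?thesis by simp
qed

lemma conv_zeta_left:
  fixes f :: "nat list \<Rightarrow> 'a::field"
  assumes c: "is_comp (a # \<beta>)"
  shows "conv zeta f (a # \<beta>) = f (a # \<beta>) + f \<beta>"
proof -
  let ?g = "a # \<beta>"
  have "conv zeta f ?g = zeta [] * f ?g + (\<Sum>i=0..length \<beta>. zeta (a # take i \<beta>) * f (drop i \<beta>))"
    unfolding conv_def length_Cons sum.atLeast0_atMost_Suc_shift by simp
  also have "(\<Sum>i=0..length \<beta>. zeta (a # take i \<beta>) * f (drop i \<beta>))
      = zeta [a] * f \<beta> + (\<Sum>i=Suc 0..length \<beta>. zeta (a # take i \<beta>) * f (drop i \<beta>))"
    by (subst sum.atLeast_Suc_atMost) auto
  also have "(\<Sum>i=Suc 0..length \<beta>. zeta (a # take i \<beta>) * f (drop i \<beta>)) = 0"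
  proof (intro sum.neutral ballI)
    fix i assume "i \<in> {Suc 0..length \<beta>}"
    then have "length (a # take i \<beta>) \<ge> 2" by simp
    then have "\<not> (is_comp (a # take i \<beta>) \<and> length (a # take i \<beta>) \<le> 1)" by linarith
    then have "(zeta (a # take i \<beta>) :: 'a) = 0" unfolding zeta_def by (rule if_not_P)
    then show "zeta (a # take i \<beta>) * f (drop i \<beta>) = 0" by simp
  qed
  moreover have "(zeta [] :: 'a) = 1" by (simp add: zeta_def is_comp_def)
  moreover have "(zeta [a] :: 'a) = 1" using c by (simp add: zeta_def is_comp_def)
  ultimately show ?thesis by simp
qed

lemma mm_sq:
  assumes two: "(2::'a::field) \<noteq> 0" and c: "is_comp \<gamma>"
  shows "conv mm mm \<gamma> = (conv chi zeta \<gamma> :: 'a)"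
proof (cases "\<gamma> = []")
  case True
  then show ?thesis by (simp add: conv_def chi_def zeta_def is_comp_def)
next
  case False
  then obtain \<beta> a where g: "\<gamma> = \<beta> @ [a]" by (metis rev_exhaust)
  have l0: "conv mm mm \<gamma> = (if odd (last \<gamma>) then sE \<gamma> * (\<Sum>j=0..k_odd \<gamma>. dd j * dd (k_odd \<gamma> - j)) else (0::'a))"
    unfolding conv_def using conv_w[OF c False, of "\<lambda>_. 1::'a"] by simp
  have l: "conv mm mm \<gamma> = (if odd (last \<gamma>) then sE \<gamma> * 2 else (0::'a))"
  proof (cases "odd (last \<gamma>)")
    case True
    then show ?thesis using l0 dd_sums(1)[OF two ko_pos[OF False True]] by simp
  next
    case False
    then show ?thesis using l0 by simp
  qed
  have cb: "is_comp \<beta>" using c g by simp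
  have r: "conv chi zeta \<gamma> = sE \<beta> + (sE (\<beta> @ [a]) :: 'a)"
    using conv_zeta_right[of \<beta> a chi] c cb g by (simp add: chi_def)
  have sg: "sE \<gamma> = sE \<beta> * (gE a :: 'a)" unfolding g sE_append by (simp add: sE_Cons)
  have la: "last \<gamma> = a" using g by simp
  show ?thesis
  proof (cases "odd a")
    case True
    then have "gE a = (1::'a)" by (simp add: gE_def)
    have x: "conv mm mm \<gamma> = sE \<beta> * (2::'a)" using l la sg True \<open>gE a = 1\<close> by simp
    have y: "conv chi zeta \<gamma> = sE \<beta> * (2::'a)" using r \<open>gE a = 1\<close>
      by (simp add: sE_append sE_Cons mult_2_right)
    show ?thesis using x y by simp
  next
    case False
    then have "gE a = (-1::'a)" by (simp add: gE_def)
    have x: "conv mm mm \<gamma> = (0::'a)" using l la False by simp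
    have y: "conv chi zeta \<gamma> = (0::'a)" using r \<open>gE a = -1\<close>
      by (simp add: sE_append sE_Cons)
    show ?thesis using x y by simp
  qed
qed


lemma mm_char:
  assumes two: "(2::'a::field) \<noteq> 0"
  shows "is_character (mm :: nat list \<Rightarrow> 'a)"
  by (rule sqrt_char[where m=mm and P="conv chi zeta", OF two conv_char[OF chi_char zeta_char] mm_Nil])
     (simp_all add: mm_def mm_sq[OF two])

lemma neg1_diff: "j \<le> K \<Longrightarrow> (-1::'a::field)^(K - j) = (-1)^K * (-1)^j"
proof -
  assume "j \<le> K"
  then have "(-1::'a)^K = (-1)^(K-j) * (-1)^j" by (simp flip: power_add)
  then have "(-1::'a)^K * (-1)^j = (-1)^(K-j) * ((-1)^j * (-1)^j)" by (simp add: ac_simps)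
  also have "(-1::'a)^j * (-1)^j = 1" by (simp flip: power_add)
  finally show ?thesis by simp
qed

lemma mm_odd:
  assumes two: "(2::'a::field) \<noteq> 0"
  shows "is_odd_fun (mm :: nat list \<Rightarrow> 'a)"
  unfolding is_odd_fun_def
proof (intro allI impI conjI)
  fix \<alpha> :: "nat list" assume c: "is_comp \<alpha>"
  have bm: "bar mm \<gamma> = (-1)^k_odd \<gamma> * (mm \<gamma> :: 'a)" for \<gamma> by (simp add: bar_def neg1_sum)
  show "conv (bar mm) mm \<alpha> = (counit \<alpha> :: 'a)"
  proof (cases "\<alpha> = []")
    case True then show ?thesis by (simp add: conv_def counit_def bar_def)
  next
    case False
    have "conv (bar mm) mm \<alpha> = (\<Sum>i=0..length \<alpha>. (-1)^k_odd (take i \<alpha>) * (mm (take i \<alpha>) * (mm (drop i \<alpha>) :: 'a)))"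
      unfolding conv_def bm by (simp add: ac_simps)
    also have "\<dots> = 0"
    proof (cases "odd (last \<alpha>)")
      case True
      then show ?thesis unfolding conv_w[OF c False] using dd_sums(2)[OF two ko_pos[OF False True]] by simp
    next
      case False
      then show ?thesis unfolding conv_w[OF c \<open>\<alpha> \<noteq> []\<close>] by simp
    qed
    finally show ?thesis using False by (simp add: counit_def)
  qed
  show "conv mm (bar mm) \<alpha> = (counit \<alpha> :: 'a)"
  proof (cases "\<alpha> = []")
    case True then show ?thesis by (simp add: conv_def counit_def bar_def)
  next
    case False
    let ?K = "k_odd \<alpha>"
    have "conv mm (bar mm) \<alpha> = (\<Sum>i=0..length \<alpha>. (-1)^(?K - k_odd (take i \<alpha>)) * (mm (take i \<alpha>) * (mm (drop i \<alpha>) :: 'a)))"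
      unfolding conv_def bm
    proof (intro sum.cong refl)
      fix i
      have "k_odd (drop i \<alpha>) = ?K - k_odd (take i \<alpha>)"
        using k_odd_append[of "take i \<alpha>" "drop i \<alpha>"] by simp
      then show "mm (take i \<alpha>) * ((-1) ^ k_odd (drop i \<alpha>) * mm (drop i \<alpha>)) =
         (-1)^(?K - k_odd (take i \<alpha>)) * (mm (take i \<alpha>) * (mm (drop i \<alpha>) :: 'a))"
        by (simp add: ac_simps)
    qed
    also have "\<dots> = 0"
    proof (cases "odd (last \<alpha>)")
      case True
      have "(\<Sum>j=0..?K. (-1)^(?K - j) * (dd j * dd (?K - j))) = (-1)^?K * (\<Sum>j=0..?K. (-1)^j * (dd j * dd (?K - j)) :: 'a)"
        unfolding sum_distrib_left by (intro sum.cong refl) (simp add: neg1_diff)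
      also have "\<dots> = 0" using dd_sums(2)[OF two ko_pos[OF False True]] by simp
      finally have z: "(\<Sum>j=0..?K. (-1)^(?K - j) * (dd j * dd (?K - j))) = (0::'a)" .
      show ?thesis using conv_w[OF c False, of "\<lambda>j. (-1::'a)^(?K - j)"] True z by simp
    next
      case False
      then show ?thesis using conv_w[OF c \<open>\<alpha> \<noteq> []\<close>, of "\<lambda>j. (-1::'a)^(?K - j)"] by simp
    qed
    finally show ?thesis using False by (simp add: counit_def)
  qed
qed


definition pp :: "nat list \<Rightarrow> 'a::field" where "pp = conv zeta (bar mm)"

lemma conv_Cons: "conv f g (a # \<beta>) = f [] * g (a # \<beta>) + (\<Sum>i=0..length \<beta>. f (a # take i \<beta>) * g (drop i \<beta>))"
  unfolding conv_def length_Cons sum.atLeast0_atMost_Suc_shift by simp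

lemma pp_Cons: "is_comp (a # \<beta>) \<Longrightarrow> pp (a # \<beta>) = bar mm (a # \<beta>) + (bar mm \<beta> :: 'a::field)"
  unfolding pp_def by (rule conv_zeta_left)

lemma pp_Nil[simp]: "pp [] = (1::'a::field)"
  by (simp add: pp_def conv_def zeta_def is_comp_def bar_def)

lemma even_sum_ko: "even (sum_list \<gamma>) \<longleftrightarrow> even (k_odd \<gamma>)"
  by (induction \<gamma>) (auto simp: k_odd_Cons)

lemma mm_Cons_ne:
  assumes c: "is_comp (a # \<beta>)" and ne: "\<beta> \<noteq> []"
  shows "mm (a # \<beta>) = (if lastodd \<beta> then gE a * sE \<beta> * dd (k_odd (a # \<beta>)) else (0::'a::field))"
    and "mm \<beta> = (if lastodd \<beta> then sE \<beta> * dd (k_odd \<beta>) else (0::'a::field))"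
proof -
  have cb: "is_comp \<beta>" using c by (simp add: is_comp_def)
  have "lastodd (a # \<beta>) = lastodd \<beta>" using ne by (simp add: lastodd_def)
  then show "mm (a # \<beta>) = (if lastodd \<beta> then gE a * sE \<beta> * dd (k_odd (a # \<beta>)) else (0::'a::field))"
    using c by (simp add: mm_def sE_Cons)
  show "mm \<beta> = (if lastodd \<beta> then sE \<beta> * dd (k_odd \<beta>) else (0::'a::field))"
    using cb by (simp add: mm_def)
qed

lemma pp_odd_zero:
  assumes c: "is_comp \<alpha>" and o: "odd (sum_list \<alpha>)"
  shows "pp \<alpha> = (0::'a::field)"
proof -
  obtain a \<beta> where al: "\<alpha> = a # \<beta>" using o by (cases \<alpha>) auto
  have ca: "is_comp (a # \<beta>)" using c al by simp
  have pa: "pp \<alpha> = (-1)^(a + sum_list \<beta>) * mm (a # \<beta>) + (-1)^sum_list \<beta> * (mm \<beta> :: 'a)"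
    unfolding al pp_Cons[OF ca] by (simp add: bar_def)
  show ?thesis
  proof (cases "\<beta> = []")
    case True
    then have "odd a" using o al by simp
    then have "mm [a] = (1::'a)" using ca True by (simp add: mm_def lastodd_def sE_def k_even_def k_odd_def dd_def cc_def)
    then show ?thesis using pa True \<open>odd a\<close> by simp
  next
    case False
    note M = mm_Cons_ne[OF ca False, where 'a='a]
    show ?thesis
    proof (cases "lastodd \<beta>")
      case False
      then show ?thesis using pa M by simp
    next
      case True
      show ?thesis
      proof (cases "even a")
        case True
        then have "gE a = (-1::'a)" "k_odd (a # \<beta>) = k_odd \<beta>" by (simp_all add: gE_def k_odd_Cons)
        then show ?thesis using pa M \<open>lastodd \<beta>\<close> True by (simp add: power_add)
      next
        case False
        have ko: "odd (k_odd (a # \<beta>))" using o al even_sum_ko by blast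
        have kb: "k_odd (a # \<beta>) = Suc (k_odd \<beta>)" using False by (simp add: k_odd_Cons)
        then have "even (k_odd \<beta>)" using ko by simp
        then have "dd (k_odd (a # \<beta>)) = (dd (k_odd \<beta>) :: 'a)" unfolding kb dd_def by simp
        moreover have "gE a = (1::'a)" using False by (simp add: gE_def)
        ultimately show ?thesis using pa M \<open>lastodd \<beta>\<close> False by (simp add: power_add)
      qed
    qed
  qed
qed

lemma pp_even: "is_even_fun (pp :: nat list \<Rightarrow> 'a::field)"
  unfolding is_even_fun_def
proof (intro allI impI)
  fix \<alpha> :: "nat list" assume c: "is_comp \<alpha>"
  show "bar pp \<alpha> = (pp \<alpha> :: 'a)"
    using pp_odd_zero[OF c, where 'a='a] by (cases "even (sum_list \<alpha>)") (simp_all add: bar_def)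
qed


lemma zeta_pp_mm:
  assumes two: "(2::'a::field) \<noteq> 0" and c: "is_comp \<alpha>"
  shows "zeta \<alpha> = conv (pp :: nat list \<Rightarrow> 'a) mm \<alpha>"
proof (cases \<alpha>)
  case Nil
  then show ?thesis by (simp add: conv_def zeta_def is_comp_def)
next
  case (Cons a \<beta>)
  have ca: "is_comp (a # \<beta>)" using c Cons by simp
  have cb: "is_comp \<beta>" using ca by (simp add: is_comp_def)
  have ct: "is_comp (a # take i \<beta>)" for i using ca by (auto simp: is_comp_def dest: in_set_takeD)
  have odd: "is_odd_fun (mm :: nat list \<Rightarrow> 'a)" by (rule mm_odd[OF two])
  have o1: "conv (bar mm) mm (a # \<beta>) = (0::'a)"
    using odd ca by (simp add: is_odd_fun_def counit_def)
  have o2: "conv (bar mm) mm \<beta> = (counit \<beta> :: 'a)"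
    using odd cb by (simp add: is_odd_fun_def)
  have bm0: "bar mm [] = (1::'a)" by (simp add: bar_def)
  have "conv pp mm (a # \<beta>) = mm (a # \<beta>) + (\<Sum>i=0..length \<beta>. (bar mm (a # take i \<beta>) + bar mm (take i \<beta>)) * (mm (drop i \<beta>) :: 'a))"
    unfolding conv_Cons pp_Cons[OF ct] by simp
  also have "\<dots> = mm (a # \<beta>) + (\<Sum>i=0..length \<beta>. bar mm (a # take i \<beta>) * (mm (drop i \<beta>) :: 'a))
       + conv (bar mm) mm \<beta>"
    by (simp add: conv_def distrib_right sum.distrib add.assoc)
  also have "mm (a # \<beta>) + (\<Sum>i=0..length \<beta>. bar mm (a # take i \<beta>) * (mm (drop i \<beta>) :: 'a))
      = conv (bar mm) mm (a # \<beta>)"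
    unfolding conv_Cons bm0 by simp
  finally have "conv pp mm (a # \<beta>) = (counit \<beta> :: 'a)" using o1 o2 by simp
  moreover have "zeta (a # \<beta>) = (counit \<beta> :: 'a)" using ca by (simp add: zeta_def counit_def)
  ultimately show ?thesis using Cons by simp
qed

lemma Spec_pp_mm:
  assumes two: "(2::'a::field) \<noteq> 0"
  shows "Spec (pp :: nat list \<Rightarrow> 'a) mm"
  unfolding Spec_def
proof (intro conjI allI impI)
  show "is_character (pp :: nat list \<Rightarrow> 'a)"
    unfolding pp_def by (rule conv_char[OF zeta_char bar_char[OF mm_char[OF two]]])
  show "is_even_fun (pp :: nat list \<Rightarrow> 'a)" by (rule pp_even)
  show "is_character (mm :: nat list \<Rightarrow> 'a)" by (rule mm_char[OF two])
  show "is_odd_fun (mm :: nat list \<Rightarrow> 'a)" by (rule mm_odd[OF two])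
  fix \<alpha> :: "nat list" assume "is_comp \<alpha>"
  then show "zeta \<alpha> = conv (pp :: nat list \<Rightarrow> 'a) mm \<alpha>" using zeta_pp_mm[OF two] by blast
qed

lemma zeta_pm_pp_mm: "(2::'a::field) \<noteq> 0 \<Longrightarrow> (zeta_pm :: (nat list \<Rightarrow> 'a) \<times> _) = (pp, mm)"
  by (rule zeta_pm_eq[OF _ Spec_pp_mm])

lemma zeta_minus_eq:
  assumes two: "(2::'a::field) \<noteq> 0"
  shows "(zeta_minus :: nat list \<Rightarrow> 'a) = mm"
proof -
  have z: "(zeta_pm :: (nat list \<Rightarrow> 'a) \<times> _) = (pp, mm)" by (rule zeta_pm_pp_mm[OF two])
  show ?thesis unfolding zeta_minus_def z by simp
qed

lemma zeta_plus_eq: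
  assumes two: "(2::'a::field) \<noteq> 0"
  shows "(zeta_plus :: nat list \<Rightarrow> 'a) = pp"
proof -
  have z: "(zeta_pm :: (nat list \<Rightarrow> 'a) \<times> _) = (pp, mm)" by (rule zeta_pm_pp_mm[OF two])
  show ?thesis unfolding zeta_plus_def z by simp
qed

lemma bicat0: "bicat 0 j = (2*j) choose j"
  using binomial_fact'[of j "2*j"] by (simp add: bicat_def)

lemma absorb_t: "Suc t * ((2*t) choose Suc t) = t * ((2*t) choose t)"
proof -
  have "Suc t * ((2*t) choose Suc t) = (2*t) * ((2*t - 1) choose t)" by (rule binomial_absorption)
  also have "\<dots> = (2*t - t) * ((2*t) choose t)" by (rule binomial_absorb_comp[symmetric])
  finally show ?thesis by simp
qed

lemma bicat1: "bicat 1 t = 2 * (((2*t) choose t) - ((2*t) choose Suc t))"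
proof -
  let ?B = "(2*t) choose t" and ?C = "(2*t) choose Suc t"
  have "Suc t * (?B - ?C) = Suc t * ?B - Suc t * ?C" by (rule diff_mult_distrib2)
  also have "\<dots> = Suc t * ?B - t * ?B" by (simp only: absorb_t)
  also have "\<dots> = ?B" by (simp only: diff_mult_distrib[symmetric] Suc_diff_le order_refl diff_self_eq_0 mult_1)
  finally have s: "Suc t * (?B - ?C) = ?B" .
  have "fact (Suc t) * fact t * (?B - ?C) = fact t * fact t * (Suc t * (?B - ?C))"
    by (simp only: fact_Suc of_nat_id ac_simps)
  also have "\<dots> = fact t * fact t * ?B" by (simp only: s)
  also have "\<dots> = fact (2*t)" using binomial_fact_lemma[of t "2*t"] by simp
  finally have e: "fact (Suc t) * fact t * (?B - ?C) = (fact (2*t) :: nat)" .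
  have "bicat 1 t = fact 2 * fact (2*t) div (fact 1 * fact (Suc t) * fact t)"
    unfolding bicat_def by (simp only: mult_1_right plus_1_eq_Suc)
  also have "\<dots> = 2 * fact (2*t) div (fact (Suc t) * fact t)"
    by (simp only: fact_2 fact_1 mult_1)
  also have "2 * fact (2*t) = (fact (Suc t) * fact t) * (2 * (?B - ?C))"
    using e by (simp only: ac_simps)
  also have "\<dots> div (fact (Suc t) * fact t) = 2 * (?B - ?C)"
    by (rule nonzero_mult_div_cancel_left) simp
  finally show ?thesis .
qed

lemma cat_id: "((2*Suc t) choose Suc t) + bicat 1 t = 4 * ((2*t) choose t)"
proof -
  let ?B = "(2*t) choose t" and ?C = "(2*t) choose Suc t"
  have "Suc t * ?C \<le> Suc t * ?B" unfolding absorb_t by (rule mult_le_mono1) simp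
  then have CB: "?C \<le> ?B" by (simp only: Suc_mult_le_cancel1)
  have e: "2 * Suc t = Suc (Suc (2*t))" by simp
  have e1: "(2*Suc t) choose Suc t = (Suc (2*t) choose t) + (Suc (2*t) choose Suc t)"
    by (simp only: e binomial_Suc_Suc)
  have e2: "Suc (2*t) choose Suc t = ?B + ?C" by (rule binomial_Suc_Suc)
  have B': "((2*Suc t) choose Suc t) = 2 * ?B + 2 * ?C"
  proof (cases t)
    case 0 then show ?thesis by simp
  next
    case (Suc s)
    have e3: "Suc (2*t) choose t = ((2*t) choose s) + ?B" by (simp only: Suc binomial_Suc_Suc)
    have "(2*t) choose s = (2*t) choose (2*t - s)" by (rule binomial_symmetric) (simp add: Suc)
    also have "2*t - s = Suc t" using Suc by simp
    finally have sym: "(2*t) choose s = ?C" .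
    show ?thesis using e1 e2 e3 sym by linarith
  qed
  have "2 * (?B - ?C) + 2 * ?C = 2 * ?B" using CB by simp
  then show ?thesis unfolding bicat1 using B' by linarith
qed

lemma cc_step:
  assumes two: "(2::'a::field) \<noteq> 0"
  shows "cc (Suc t) - cc t = - (of_nat (bicat 1 t) / (2::'a)^(2*Suc t))"
proof -
  let ?B = "(2*t) choose t" and ?B' = "(2*Suc t) choose Suc t"
  have D: "(2::'a)^(2*Suc t) = 4 * 2^(2*t)" by (simp add: power_add)
  have nz: "(2::'a)^(2*t) \<noteq> 0" using two by simp
  have f4: "(4::'a) \<noteq> 0"
  proof -
    have "(4::'a) = 2 * 2" by simp
    moreover have "(2::'a) * 2 \<noteq> 0" using two by (simp only: mult_eq_0_iff) simp
    ultimately show ?thesis by simp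
  qed
  have id: "(of_nat ?B' :: 'a) + of_nat (bicat 1 t) = 4 * of_nat ?B"
  proof -
    have "of_nat (?B' + bicat 1 t) = (of_nat (4 * ?B) :: 'a)" by (simp only: cat_id)
    then show ?thesis by (simp only: of_nat_add of_nat_mult of_nat_numeral)
  qed
  have c1: "cc (Suc t) = (of_nat ?B' :: 'a) / 2^(2*Suc t)" by (simp only: cc_def)
  have c2: "cc t = 4 * (of_nat ?B :: 'a) / 2^(2*Suc t)"
    unfolding cc_def D using nz f4 by (simp add: field_simps del: binomial_Suc_Suc)
  have "cc (Suc t) - cc t = (of_nat ?B' - 4 * of_nat ?B) / ((2::'a)^(2*Suc t))"
    by (simp only: c1 c2 diff_divide_distrib)
  also have "of_nat ?B' - 4 * of_nat ?B = - (of_nat (bicat 1 t) :: 'a)"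
    using id by (simp only: eq_neg_iff_add_eq_0 diff_add_eq add.commute[of "of_nat (bicat 1 t)"] diff_eq_eq) simp
  finally show ?thesis by (simp only: minus_divide_left)
qed

theorem theorem3p2:
  fixes \<alpha> :: "nat list"
  assumes char2: "(2::'a::field) \<noteq> 0"
    and comp: "is_comp \<alpha>"
    and pos: "sum_list \<alpha> > 0"
  shows "(zeta_minus :: nat list \<Rightarrow> 'a) \<alpha> =
           (if odd (last \<alpha>)
            then (-1) ^ k_even \<alpha> / 2 ^ (2 * (k_odd \<alpha> div 2)) * of_nat (bicat 0 (k_odd \<alpha> div 2))
            else 0)
       \<and> (zeta_plus :: nat list \<Rightarrow> 'a) \<alpha> =
           (if odd (hd \<alpha>) \<and> odd (last \<alpha>) \<and> even (sum_list \<alpha>)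
            then (-1) ^ (k_even \<alpha> + 1) / 2 ^ k_odd \<alpha> * of_nat (bicat 1 (k_odd \<alpha> div 2 - 1))
            else if length \<alpha> = 1 \<and> even (sum_list \<alpha>) then 1
            else 0)
       \<and> (zeta_minus :: nat list \<Rightarrow> 'a) [] = 1
       \<and> (zeta_plus :: nat list \<Rightarrow> 'a) [] = 1"
  unfolding zeta_minus_eq[OF char2] zeta_plus_eq[OF char2]
proof (intro conjI)
  show "(mm [] :: 'a) = 1" by simp
  show "(pp [] :: 'a) = 1" by simp
  have ne: "\<alpha> \<noteq> []" using pos by auto
  show "(mm \<alpha> :: 'a) = (if odd (last \<alpha>)
            then (-1) ^ k_even \<alpha> / 2 ^ (2 * (k_odd \<alpha> div 2)) * of_nat (bicat 0 (k_odd \<alpha> div 2))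
            else 0)"
    using comp ne by (simp add: mm_def lastodd_def sE_def dd_def cc_def bicat0)
  obtain a \<beta> where al: "\<alpha> = a # \<beta>" using ne by (cases \<alpha>) auto
  have ca: "is_comp (a # \<beta>)" using comp al by simp
  have pa: "pp \<alpha> = (-1)^(a + sum_list \<beta>) * mm (a # \<beta>) + (-1)^sum_list \<beta> * (mm \<beta> :: 'a)"
    unfolding al pp_Cons[OF ca] by (simp add: bar_def)
  show "(pp \<alpha> :: 'a) = (if odd (hd \<alpha>) \<and> odd (last \<alpha>) \<and> even (sum_list \<alpha>)
            then (-1) ^ (k_even \<alpha> + 1) / 2 ^ k_odd \<alpha> * of_nat (bicat 1 (k_odd \<alpha> div 2 - 1))
            else if length \<alpha> = 1 \<and> even (sum_list \<alpha>) then 1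
            else 0)"
  proof (cases "odd (hd \<alpha>) \<and> odd (last \<alpha>) \<and> even (sum_list \<alpha>)")
    case True
    then have oa: "odd a" and ol: "odd (last \<alpha>)" and es: "even (sum_list \<alpha>)" using al by auto
    have bne: "\<beta> \<noteq> []" using oa es al by auto
    have lb: "lastodd \<beta>" using ol al bne by (simp add: lastodd_def)
    have kb: "k_odd \<alpha> = Suc (k_odd \<beta>)" using oa al by (simp add: k_odd_Cons)
    have "even (k_odd \<alpha>)" using es even_sum_ko by blast
    then obtain t where t: "k_odd \<beta> = 2*t+1" using kb by (metis even_Suc oddE)
    have K: "k_odd \<alpha> = 2 * Suc t" using kb t by simp
    have ke: "k_even \<alpha> = k_even \<beta>" using oa al by (simp add: k_even_def)
    have ob: "odd (sum_list \<beta>)" using es oa al by simp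
    have ev: "even (a + sum_list \<beta>)" using es al by simp
    note M = mm_Cons_ne[OF ca bne, where 'a='a]
    have m1: "mm (a # \<beta>) = sE \<beta> * (cc (Suc t) :: 'a)"
      using M(1) lb oa K al by (simp add: gE_def dd_def)
    have m2: "mm \<beta> = sE \<beta> * (cc t :: 'a)"
      using M(2) lb t by (simp add: dd_def)
    have "pp \<alpha> = sE \<beta> * (cc (Suc t) - cc t :: 'a)"
      unfolding pa m1 m2 using ev ob by (simp add: algebra_simps)
    also have "\<dots> = (-1) ^ (k_even \<alpha> + 1) / 2 ^ k_odd \<alpha> * of_nat (bicat 1 (k_odd \<alpha> div 2 - 1))"
      unfolding cc_step[OF char2] K ke by (simp add: sE_def)
    finally show ?thesis by (simp only: if_P[OF True])
  next
    case False
    note F = False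
    show ?thesis
    proof (cases "length \<alpha> = 1 \<and> even (sum_list \<alpha>)")
      case True
      then have b: "\<beta> = []" and ea: "even a" using al by auto
      have "mm [a] = (0::'a)" using ea by (simp add: mm_def lastodd_def)
      then have "pp \<alpha> = (1::'a)" using pa b ea by simp
      then show ?thesis by (simp only: if_not_P[OF F] if_P[OF True])
    next
      case False
      have "pp \<alpha> = (0::'a)"
      proof (cases "even (sum_list \<alpha>)")
        case False
        then show ?thesis using pp_odd_zero[OF comp] by blast
      next
        case True
        then have bne: "\<beta> \<noteq> []" using \<open>\<not> (length \<alpha> = 1 \<and> even (sum_list \<alpha>))\<close> al by auto
        note M = mm_Cons_ne[OF ca bne, where 'a='a]
        show ?thesis
        proof (cases "lastodd \<beta>")
          case False
          then show ?thesis using pa M by simp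
        next
          case True
          then have "odd (last \<alpha>)" using al bne by (simp add: lastodd_def)
          then have ea: "even a" using F \<open>even (sum_list \<alpha>)\<close> al by auto
          then have "gE a = (-1::'a)" "k_odd (a # \<beta>) = k_odd \<beta>" by (simp_all add: gE_def k_odd_Cons)
          then show ?thesis using pa M True ea by (simp add: power_add)
        qed
      qed
      then show ?thesis by (simp only: if_not_P[OF F] if_not_P[OF False])
    qed
  qed
qed

end
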